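(* Let $n\geq 0$ and $0\leq l,m\leq n$ be integers. Then, as an identity of rational functions in $q$ and $z$, \[ \sum_{\substack{k=0\\ k\neq m}}^{n}{n\brack k}\frac{(q/z;q)_k (zq^{-l};q)_{n-k}}{1-q^{k-m}} z^k =(-1)^m q^{\binom{m+1}{2}}{n\brack m}(zq^{-l};q)_l(zq^{-m};q)_{n-l}\left(\sum_{k=0}^{n-l-1}\frac{zq^{k-m}}{1-zq^{k-m}} - \sum_{\substack{k=0\\ k\neq m}}^{n}\frac{q^{k-m}}{1-q^{k-m}} \right). \]
   Context: For $N\geq 0$, $(x;q)_N=(1-x)(1-xq)\cdots(1-xq^{N-1})$ (with $(x;q)_0=1$). The $q$-binomial coefficient is ${n\brack k}=\frac{(q;q)_n}{(q;q)_k(q;q)_{n-k}}$ for $0\leq k\leq n$ and $0$ otherwise. *)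

theory Defs
  imports Complex_Main
begin

definition qpoch :: "complex \<Rightarrow> complex \<Rightarrow> nat \<Rightarrow> complex" where
  "qpoch x q N = (\<Prod>i<N. 1 - x * q ^ i)"

definition qbinom :: "complex \<Rightarrow> nat \<Rightarrow> nat \<Rightarrow> complex" where
  "qbinom q n k = (if k \<le> n then qpoch q q n / (qpoch q q k * qpoch q q (n - k)) else 0)"

end

theory Submission
  imports Defs "HOL-Computational_Algebra.Polynomial"
begin


lemma prod_int_concat:
  fixes g :: "int \<Rightarrow> 'a::comm_monoid_mult"
  assumes "a \<le> b" "b \<le> c"
  shows "prod g {a..<c} = prod g {a..<b} * prod g {b..<c}"
proof -
  have "{a..<c} = {a..<b} \<union> {b..<c}" using assms by auto
  thus ?thesis by (simp add: prod.union_disjoint[symmetric] ivl_disj_un_two)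
qed

lemma qpoch_shift:
  fixes q z :: complex and a :: int
  assumes "q \<noteq> 0"
  shows "qpoch (z * q powi a) q N = (\<Prod>i\<in>{a..<a + int N}. 1 - z * q powi i)"
proof -
  have "(\<Prod>i\<in>{a..<a + int N}. 1 - z * q powi i) = (\<Prod>i\<in>(\<lambda>i. a + int i) ` {..<N}. 1 - z * q powi i)"
  proof -
    have "{a..<a + int N} = (\<lambda>i. a + int i) ` {..<N}"
    proof
      show "{a..<a + int N} \<subseteq> (\<lambda>i. a + int i) ` {..<N}"
      proof
        fix x assume "x \<in> {a..<a + int N}"
        hence "x = a + int (nat (x - a))" "nat (x - a) < N" by auto
        thus "x \<in> (\<lambda>i. a + int i) ` {..<N}" by blast
      qed
    qed auto
    thus ?thesis by simp
  qed
  also have "\<dots> = (\<Prod>i<N. 1 - z * q powi (a + int i))"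
    by (subst prod.reindex) (auto simp: inj_on_def)
  also have "\<dots> = qpoch (z * q powi a) q N"
    unfolding qpoch_def using assms by (intro prod.cong) (auto simp: power_int_add)
  finally show ?thesis by simp
qed

lemma qpoch_comb:
  fixes q z :: complex
  assumes "q \<noteq> 0" "k \<le> n" "l \<le> n"
  shows "qpoch (z * q powi (- int k)) q k * qpoch (z * q powi (- int l)) q (n - k)
       = qpoch (z * q powi (- int k)) q (n - l) * qpoch (z * q powi (- int l)) q l"
proof -
  define f where "f = (\<lambda>i::int. 1 - z * q powi i)"
  define G where "G = (\<lambda>a b. prod f {a..<b})"
  have e: "\<And>a N. qpoch (z * q powi a) q N = G a (a + int N)"
    using qpoch_shift[OF assms(1)] unfolding G_def f_def by simp
  have c: "\<And>a b c. a \<le> b \<Longrightarrow> b \<le> c \<Longrightarrow> G a c = G a b * G b c"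
    unfolding G_def by (rule prod_int_concat)
  show ?thesis
  proof (cases "int n - int k - int l \<ge> 0")
    case True
    have 1: "G (- int l) (int n - int k - int l) = G (- int l) 0 * G 0 (int n - int k - int l)"
      using True assms by (intro c) auto
    have 2: "G (- int k) (int n - int k - int l) = G (- int k) 0 * G 0 (int n - int k - int l)"
      using True assms by (intro c) auto
    have 3: "- int l + int (n - k) = int n - int k - int l" "- int k + int (n - l) = int n - int k - int l"
      "- int k + int k = 0" "- int l + int l = 0"
      using assms by auto
    show ?thesis unfolding e 3 1 2 by (simp only: ac_simps)
  next
    case False
    have 1: "G (- int l) 0 = G (- int l) (int n - int k - int l) * G (int n - int k - int l) 0"
      using False assms by (intro c) auto
    have 2: "G (- int k) 0 = G (- int k) (int n - int k - int l) * G (int n - int k - int l) 0"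
      using False assms by (intro c) auto
    have 3: "- int l + int (n - k) = int n - int k - int l" "- int k + int (n - l) = int n - int k - int l"
      "- int k + int k = 0" "- int l + int l = 0"
      using assms by auto
    show ?thesis unfolding e 3 1 2 by (simp only: ac_simps)
  qed
qed

lemma powi_mult_pow:
  fixes q :: complex
  assumes "q \<noteq> 0"
  shows "q powi a * q ^ j = q powi (a + int j)"
  using assms by (simp add: power_int_add)

lemma powi_neg_Suc:
  fixes q :: complex
  shows "q powi (- int (Suc i)) = inverse (q * q ^ i)"
  by (simp only: power_int_minus power_int_of_nat power_Suc)

lemma qpoch_rev:
  fixes q z :: complex
  assumes "q \<noteq> 0"
  shows "qpoch (z * q powi (- int k)) q k = (\<Prod>i<k. 1 - z * q powi (- int (Suc i)))"
proof -
  have "qpoch (z * q powi (- int k)) q k = (\<Prod>i<k. 1 - z * q powi (- int k) * q ^ (k - Suc i))"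
    unfolding qpoch_def by (rule prod.nat_diff_reindex[symmetric])
  also have "\<dots> = (\<Prod>i<k. 1 - z * q powi (- int (Suc i)))"
  proof (intro prod.cong refl)
    fix i assume "i \<in> {..<k}"
    hence "q powi (- int k) * q ^ (k - Suc i) = q powi (- int (Suc i))"
      using assms by (simp add: powi_mult_pow of_nat_diff)
    thus "1 - z * q powi (- int k) * q ^ (k - Suc i) = 1 - z * q powi (- int (Suc i))"
      by (simp add: mult.assoc)
  qed
  finally show ?thesis .
qed

lemma prod_rev_powi:
  fixes q :: complex
  assumes "q \<noteq> 0"
  shows "(\<Prod>j<k. 1 - q powi (int j - int k)) = (\<Prod>i<k. 1 - q powi (- int (Suc i)))"
proof -
  have "(\<Prod>j<k. 1 - q powi (int j - int k)) = (\<Prod>i<k. 1 - q powi (int (k - Suc i) - int k))"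
    by (rule prod.nat_diff_reindex[symmetric])
  also have "\<dots> = (\<Prod>i<k. 1 - q powi (- int (Suc i)))"
    by (intro prod.cong refl) (auto simp: of_nat_diff)
  finally show ?thesis .
qed

lemma qpoch_left:
  fixes q z :: complex
  assumes "q \<noteq> 0" "z \<noteq> 0"
  shows "qpoch (q / z) q k * z ^ k * (\<Prod>j<k. 1 - q powi (int j - int k))
       = qpoch (z * q powi (- int k)) q k * qpoch q q k"
proof -
  have "qpoch (q / z) q k * z ^ k * (\<Prod>j<k. 1 - q powi (int j - int k))
     = (\<Prod>i<k. (1 - q / z * q ^ i) * z * (1 - q powi (- int (Suc i))))"
    unfolding qpoch_def prod_rev_powi[OF assms(1)] by (simp add: prod.distrib)
  also have "\<dots> = (\<Prod>i<k. (1 - z * q powi (- int (Suc i))) * (1 - q * q ^ i))"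
  proof (intro prod.cong refl)
    fix i
    have "q powi (- int (Suc i)) = inverse (q * q ^ i)"
      by (rule powi_neg_Suc)
    moreover have "q * q ^ i \<noteq> 0" using assms by simp
    ultimately show "(1 - q / z * q ^ i) * z * (1 - q powi (- int (Suc i))) =
         (1 - z * q powi (- int (Suc i))) * (1 - q * q ^ i)"
      using assms by (simp add: field_simps)
  qed
  also have "\<dots> = qpoch (z * q powi (- int k)) q k * qpoch q q k"
    unfolding qpoch_rev[OF assms(1)] unfolding qpoch_def by (simp add: prod.distrib)
  finally show ?thesis .
qed

lemma pow_choose2: "(q::complex) ^ ((m + 1) choose 2) = (\<Prod>i<m. q ^ Suc i)"
proof (induction m)
  case (Suc m)
  have "(Suc m + 1) choose 2 = ((m + 1) choose 2) + Suc m"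
    by (simp add: numeral_2_eq_2)
  thus ?case using Suc by (simp add: power_add)
qed (simp add: numeral_2_eq_2)

lemma qpoch_sign:
  fixes q z :: complex
  assumes "q \<noteq> 0" "z \<noteq> 0"
  shows "qpoch (q / z) q m * z ^ m = (-1) ^ m * q ^ ((m + 1) choose 2) * qpoch (z * q powi (- int m)) q m"
proof -
  have "qpoch (q / z) q m * z ^ m = (\<Prod>i<m. (1 - q / z * q ^ i) * z)"
    unfolding qpoch_def by (simp add: prod.distrib)
  also have "\<dots> = (\<Prod>i<m. (-1) * q ^ Suc i * (1 - z * q powi (- int (Suc i))))"
  proof (intro prod.cong refl)
    fix i
    have "q powi (- int (Suc i)) = inverse (q * q ^ i)"
      by (rule powi_neg_Suc)
    moreover have "q * q ^ i \<noteq> 0" using assms by simp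
    ultimately show "(1 - q / z * q ^ i) * z = (-1) * q ^ Suc i * (1 - z * q powi (- int (Suc i)))"
      using assms by (simp add: field_simps)
  qed
  also have "\<dots> = (\<Prod>i<m. (-1::complex)) * (\<Prod>i<m. q ^ Suc i) * (\<Prod>i<m. 1 - z * q powi (- int (Suc i)))"
    by (simp only: prod.distrib)
  also have "\<dots> = (-1) ^ m * q ^ ((m + 1) choose 2) * qpoch (z * q powi (- int m)) q m"
    unfolding qpoch_rev[OF assms(1)] pow_choose2 by simp
  finally show ?thesis .
qed

lemma prod_right:
  fixes q :: complex
  assumes "k \<le> n"
  shows "(\<Prod>j\<in>{k<..n}. 1 - q powi (int j - int k)) = qpoch q q (n - k)"
proof -
  have "(\<Prod>j\<in>{k<..n}. 1 - q powi (int j - int k)) = (\<Prod>j\<in>{k<..n}. 1 - q ^ (j - k))"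
  proof (intro prod.cong refl)
    fix j assume "j \<in> {k<..n}"
    hence "int j - int k = int (j - k)" by auto
    thus "1 - q powi (int j - int k) = 1 - q ^ (j - k)" by (simp only: power_int_of_nat)
  qed
  also have "\<dots> = qpoch q q (n - k)"
  unfolding qpoch_def
  by (rule prod.reindex_bij_witness[where i="\<lambda>i. k + Suc i" and j="\<lambda>j. j - Suc k"])
     (use assms in \<open>auto simp flip: power_Suc simp: Suc_diff_Suc\<close>)
  finally show ?thesis .
qed

lemma qpoch_qq_nz:
  fixes q :: complex
  assumes "\<forall>j\<in>{1..n}. q ^ j \<noteq> 1" "N \<le> n"
  shows "qpoch q q N \<noteq> 0"
proof -
  have "1 - q * q ^ i \<noteq> 0" if "i \<in> {..<N}" for i
  proof -
    have "Suc i \<in> {1..n}" using assms(2) that by auto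
    hence "q ^ Suc i \<noteq> 1" using assms(1) by blast
    thus "1 - q * q ^ i \<noteq> 0" by simp
  qed
  thus ?thesis by (simp add: qpoch_def)
qed

lemma eval_point:
  fixes q z :: complex
  assumes q0: "q \<noteq> 0" and z0: "z \<noteq> 0" and qj: "\<forall>j\<in>{1..n}. q ^ j \<noteq> 1"
    and kn: "k \<le> n" and ln: "l \<le> n"
  shows "qbinom q n k * qpoch (q / z) q k * qpoch (z * q powi (- int l)) q (n - k) * z ^ k
          * (\<Prod>j\<in>{0..n} - {k}. 1 - q powi (int j - int k))
       = qpoch q q n * qpoch (z * q powi (- int k)) q (n - l) * qpoch (z * q powi (- int l)) q l"
proof -
  have split: "{0..n} - {k} = {..<k} \<union> {k<..n}" using kn by auto
  have "(\<Prod>j\<in>{0..n} - {k}. 1 - q powi (int j - int k))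
      = (\<Prod>j<k. 1 - q powi (int j - int k)) * qpoch q q (n - k)"
    unfolding split prod_right[OF kn, symmetric] by (rule prod.union_disjoint) auto
  moreover have "qpoch q q k \<noteq> 0" "qpoch q q (n - k) \<noteq> 0"
    using qpoch_qq_nz[OF qj] kn by auto
  ultimately have "qbinom q n k * qpoch (q / z) q k * qpoch (z * q powi (- int l)) q (n - k) * z ^ k
          * (\<Prod>j\<in>{0..n} - {k}. 1 - q powi (int j - int k))
      = qpoch q q n / (qpoch q q k * qpoch q q (n - k)) * (qpoch (q / z) q k * z ^ k * (\<Prod>j<k. 1 - q powi (int j - int k)))
          * qpoch (z * q powi (- int l)) q (n - k) * qpoch q q (n - k)"
    using kn by (simp add: qbinom_def)
  also have "\<dots> = qpoch q q n / (qpoch q q k * qpoch q q (n - k)) * (qpoch (z * q powi (- int k)) q k * qpoch q q k)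
          * qpoch (z * q powi (- int l)) q (n - k) * qpoch q q (n - k)"
    unfolding qpoch_left[OF q0 z0] ..
  also have "\<dots> = qpoch q q n * (qpoch (z * q powi (- int k)) q k * qpoch (z * q powi (- int l)) q (n - k))"
    using \<open>qpoch q q k \<noteq> 0\<close> \<open>qpoch q q (n - k) \<noteq> 0\<close> by (simp add: field_simps)
  also have "\<dots> = qpoch q q n * qpoch (z * q powi (- int k)) q (n - l) * qpoch (z * q powi (- int l)) q l"
    unfolding qpoch_comb[OF q0 kn ln] by simp
  finally show ?thesis .
qed

lemma poly_lin: "poly [:1, - c:] t = 1 - c * (t::complex)"
  by simp

lemma pderiv_lin: "pderiv [:1, - c:] = [:- (c::complex):]"
  by (simp add: pderiv_pCons)

lemma pderiv_sum: "pderiv (sum f A) = (\<Sum>x\<in>A. pderiv (f x))"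
  using higher_pderiv_sum[of 1 f A] by simp

lemma degree_prod_lin:
  assumes "finite S"
  shows "degree (\<Prod>j\<in>S. [:1, - c j:] :: complex poly) \<le> card S"
proof -
  have "degree (\<Prod>j\<in>S. [:1, - c j:] :: complex poly) \<le> sum (degree \<circ> (\<lambda>j. [:1, - c j:] :: complex poly)) S"
    by (rule degree_prod_sum_le[OF assms])
  also have "\<dots> \<le> sum (\<lambda>_. 1) S"
    by (intro sum_mono) auto
  finally show ?thesis by simp
qed



theorem theorem1p1:
  fixes q z :: complex and n l m :: nat
  assumes "l \<le> n" and "m \<le> n"
    and "q \<noteq> 0" and "z \<noteq> 0"
    and "\<forall>j\<in>{1..n}. q ^ j \<noteq> 1"
    and "\<forall>k<n - l. z * q powi (int k - int m) \<noteq> 1"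
  shows "(\<Sum>k\<in>{0..n} - {m}. qbinom q n k * qpoch (q / z) q k * qpoch (z * q powi (- int l)) q (n - k)
             / (1 - q powi (int k - int m)) * z ^ k)
       = (-1) ^ m * q ^ ((m + 1) choose 2) * qbinom q n m * qpoch (z * q powi (- int l)) q l
           * qpoch (z * q powi (- int m)) q (n - l)
           * ((\<Sum>k<n - l. z * q powi (int k - int m) / (1 - z * q powi (int k - int m)))
              - (\<Sum>k\<in>{0..n} - {m}. q powi (int k - int m) / (1 - q powi (int k - int m))))"
proof -
  note ln = assms(1) and mn = assms(2) and q0 = assms(3) and z0 = assms(4) and qj = assms(5)
    and zq = assms(6)
  define w where "w = z * q powi (- int l)"
  define I where "I = {0..n}"
  define a where "a k = qbinom q n k * qpoch (q / z) q k * qpoch w q (n - k) * z ^ k" for k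
  define lin where "lin c = ([:1, - c:] :: complex poly)" for c
  define PA where "PA = (\<Sum>k\<in>I. smult (a k) (\<Prod>j\<in>I - {k}. lin (q ^ j)))"
  define K where "K = qpoch q q n * qpoch w q l"
  define PB where "PB = smult K (\<Prod>i<n - l. lin (z * q ^ i))"
  define t where "t k = q powi (- int k)" for k :: nat
  have qt: "q ^ j * t k = q powi (int j - int k)" for j k
  proof -
    have "q powi (- int k) * q ^ j = q powi (- int k + int j)" by (rule powi_mult_pow[OF q0])
    thus ?thesis unfolding t_def by (simp add: mult.commute)
  qed
  have qt': "t k * q ^ j = q powi (int j - int k)" for j k
    using qt[of j k] by (simp only: mult.commute)
  have finI: "finite I" unfolding I_def by simp
  have evalA: "poly PA (t k) = a k * (\<Prod>j\<in>I - {k}. 1 - q powi (int j - int k))" if kI: "k \<in> I" for k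
  proof -
    have "poly PA (t k) = (\<Sum>k'\<in>I. a k' * (\<Prod>j\<in>I - {k'}. 1 - q powi (int j - int k)))"
      unfolding PA_def lin_def by (simp add: poly_sum poly_prod qt')
    also have "\<dots> = a k * (\<Prod>j\<in>I - {k}. 1 - q powi (int j - int k))
        + (\<Sum>k'\<in>I - {k}. a k' * (\<Prod>j\<in>I - {k'}. 1 - q powi (int j - int k)))"
      using finI kI by (simp add: sum.remove)
    also have "(\<Sum>k'\<in>I - {k}. a k' * (\<Prod>j\<in>I - {k'}. 1 - q powi (int j - int k))) = 0"
    proof (intro sum.neutral ballI)
      fix k' assume "k' \<in> I - {k}"
      hence "k \<in> I - {k'}" using kI by auto
      hence "(\<Prod>j\<in>I - {k'}. 1 - q powi (int j - int k)) = 0"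
        using finI by (intro prod_zero bexI[of _ k]) auto
      thus "a k' * (\<Prod>j\<in>I - {k'}. 1 - q powi (int j - int k)) = 0" by simp
    qed
    finally show ?thesis by simp
  qed
  have evalB: "poly PB (t k) = K * qpoch (z * q powi (- int k)) q (n - l)" for k
    unfolding PB_def lin_def qpoch_def t_def by (simp add: poly_prod mult_ac)
  have evalAB: "poly PA (t k) = poly PB (t k)" if "k \<in> I" for k
  proof -
    have "k \<le> n" using that unfolding I_def by simp
    have "poly PA (t k) = qpoch q q n * qpoch (z * q powi (- int k)) q (n - l) * qpoch w q l"
      unfolding evalA[OF that] a_def w_def I_def by (rule eval_point[OF q0 z0 qj \<open>k \<le> n\<close> ln])
    thus ?thesis unfolding evalB K_def by (simp only: ac_simps)
  qed
  have tinj: "inj_on t I"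
  proof -
    have ne: "t a' \<noteq> t b" if "a' < b" "b \<le> n" for a' b
    proof
      assume eq: "t a' = t b"
      have d: "int b - int a' = int (b - a')" using that by simp
      have "q ^ b * t a' = q ^ (b - a')"
        unfolding qt d power_int_of_nat ..
      moreover have "q ^ b * t b = 1" unfolding qt by simp
      ultimately have "q ^ (b - a') = 1" using eq by simp
      moreover have "b - a' \<in> {1..n}" using that by auto
      ultimately show False using qj by blast
    qed
    show ?thesis unfolding inj_on_def I_def
    proof (intro ballI impI)
      fix x y assume "x \<in> {0..n}" "y \<in> {0..n}" "t x = t y"
      thus "x = y" using ne[of x y] ne[of y x] by (cases "x < y"; cases "y < x") auto
    qed
  qed
  have PAB: "PA = PB"
  proof (rule poly_eqI_degree[where A = "t ` I"])
    show "poly PA x = poly PB x" if "x \<in> t ` I" for x using that evalAB by auto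
    have cI: "card (t ` I) = Suc n" using card_image[OF tinj] unfolding I_def by simp
    have "degree PA \<le> n" unfolding PA_def
    proof (intro degree_sum_le[OF finI])
      fix k assume "k \<in> I"
      hence "card (I - {k}) = n" unfolding I_def by simp
      thus "degree (smult (a k) (\<Prod>j\<in>I - {k}. lin (q ^ j))) \<le> n"
        using degree_prod_lin[of "I - {k}" "\<lambda>j. q ^ j"] finI unfolding lin_def
        using degree_smult_le order_trans by fastforce
    qed
    thus "degree PA < card (t ` I)" using cI by simp
    have "degree PB \<le> n - l" unfolding PB_def lin_def
      using degree_prod_lin[of "{..<n - l}" "\<lambda>i. z * q ^ i"]
      using degree_smult_le order_trans by fastforce
    thus "degree PB < card (t ` I)" using cI by simp
  qed
  define c where "c j = 1 - q powi (int j - int m)" for j :: nat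
  define e where "e j = 1 - z * q powi (int j - int m)" for j :: nat
  define D where "D = (\<Prod>j\<in>I - {m}. c j)"
  define E where "E = (\<Prod>i<n - l. e i)"
  define S1 where "S1 = (\<Sum>k\<in>I - {m}. a k / c k)"
  define S2 where "S2 = (\<Sum>k<n - l. z * q powi (int k - int m) / e k)"
  define S3 where "S3 = (\<Sum>k\<in>I - {m}. q powi (int k - int m) / c k)"
  have mI: "m \<in> I" using mn unfolding I_def by simp
  have cm: "c m = 0" unfolding c_def by simp
  have pc: "poly (lin (q ^ j)) (t m) = c j" for j
    unfolding lin_def c_def using qt'[of m j] by (simp add: mult.commute)
  have pe: "poly (lin (z * q ^ j)) (t m) = e j" for j
    unfolding lin_def e_def using qt'[of m j] by (simp add: mult_ac)
  have dlin: "pderiv (lin x) = [:- x:]" for x unfolding lin_def by (rule pderiv_lin)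
  have cnz: "c j \<noteq> 0" if "j \<in> I - {m}" for j
  proof
    assume "c j = 0"
    hence h: "q powi (int j - int m) = 1" unfolding c_def by simp
    show False
    proof (cases "m < j")
      case True
      hence d: "int j - int m = int (j - m)" by simp
      have "q ^ (j - m) = 1" using h unfolding d power_int_of_nat .
      moreover have "j - m \<in> {1..n}" using True that unfolding I_def by auto
      ultimately show False using qj by blast
    next
      case False
      hence "m > j" using that by auto
      hence d: "int j - int m = - int (m - j)" by simp
      have "inverse (q ^ (m - j)) = 1" using h unfolding d power_int_minus power_int_of_nat .
      hence "q ^ (m - j) = 1" by (metis inverse_1 inverse_inverse_eq)
      moreover have "m - j \<in> {1..n}" using \<open>m > j\<close> mn by auto
      ultimately show False using qj by blast
    qed
  qed
  have enz: "e i \<noteq> 0" if "i < n - l" for i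
    using zq that unfolding e_def by auto
  have Dnz: "D \<noteq> 0" unfolding D_def using cnz finI by simp
  have Enz: "E \<noteq> 0" unfolding E_def using enz by simp
  have Drem: "D = c k * (\<Prod>j\<in>I - {m} - {k}. c j)" if "k \<in> I - {m}" for k
    unfolding D_def using that finI by (simp add: prod.remove)
  have Ediv: "(\<Prod>j\<in>{..<n - l} - {i}. e j) = E / e i" if "i < n - l" for i
    unfolding E_def using that enz by (simp add: prod.remove nonzero_eq_divide_eq mult.commute)
  have Ddiv: "(\<Prod>j\<in>I - {m} - {k}. c j) = D / c k" if "k \<in> I - {m}" for k
    using Drem[OF that] cnz[OF that] by (simp add: nonzero_eq_divide_eq mult.commute)
  have inner_ne: "(\<Sum>i\<in>I - {k}. (\<Prod>j\<in>I - {k} - {i}. c j) * (- (q ^ i))) = D / c k * (- (q ^ m))"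
    if kk: "k \<in> I - {m}" for k
  proof -
    have "(\<Sum>i\<in>I - {k}. (\<Prod>j\<in>I - {k} - {i}. c j) * (- (q ^ i)))
        = (\<Prod>j\<in>I - {k} - {m}. c j) * (- (q ^ m)) + (\<Sum>i\<in>I - {k} - {m}. (\<Prod>j\<in>I - {k} - {i}. c j) * (- (q ^ i)))"
      using kk mI finI by (subst sum.remove[of _ m]) auto
    also have "(\<Sum>i\<in>I - {k} - {m}. (\<Prod>j\<in>I - {k} - {i}. c j) * (- (q ^ i))) = 0"
    proof (intro sum.neutral ballI)
      fix i assume "i \<in> I - {k} - {m}"
      hence "m \<in> I - {k} - {i}" using kk mI by auto
      hence "(\<Prod>j\<in>I - {k} - {i}. c j) = 0" using finI cm by (intro prod_zero bexI[of _ m]) auto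
      thus "(\<Prod>j\<in>I - {k} - {i}. c j) * (- (q ^ i)) = 0" by simp
    qed
    also have "I - {k} - {m} = I - {m} - {k}" by auto
    finally show ?thesis using Ddiv[OF kk] by simp
  qed
  have inner_m: "(\<Sum>i\<in>I - {m}. (\<Prod>j\<in>I - {m} - {i}. c j) * (- (q ^ i))) = (\<Sum>i\<in>I - {m}. D / c i * (- (q ^ i)))"
    using Ddiv by (intro sum.cong) auto
  have qpm: "q ^ i = q ^ m * q powi (int i - int m)" for i
  proof -
    have "q powi (int i - int m) * q ^ m = q powi (int i - int m + int m)"
      by (rule powi_mult_pow[OF q0])
    also have "\<dots> = q ^ i" by (simp only: diff_add_cancel power_int_of_nat)
    finally show ?thesis by (simp only: mult.commute)
  qed
  have dA: "poly (pderiv PA) (t m) = - (q ^ m) * D * (S1 + a m * S3)"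
  proof -
    have "poly (pderiv PA) (t m) = (\<Sum>k\<in>I. a k * (\<Sum>i\<in>I - {k}. (\<Prod>j\<in>I - {k} - {i}. c j) * (- (q ^ i))))"
      unfolding PA_def pderiv_sum pderiv_smult pderiv_prod
      by (simp add: poly_sum poly_prod pc dlin mult.commute)
    also have "\<dots> = a m * (\<Sum>i\<in>I - {m}. (\<Prod>j\<in>I - {m} - {i}. c j) * (- (q ^ i)))
        + (\<Sum>k\<in>I - {m}. a k * (\<Sum>i\<in>I - {k}. (\<Prod>j\<in>I - {k} - {i}. c j) * (- (q ^ i))))"
      using finI mI by (simp add: sum.remove)
    also have "(\<Sum>k\<in>I - {m}. a k * (\<Sum>i\<in>I - {k}. (\<Prod>j\<in>I - {k} - {i}. c j) * (- (q ^ i))))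
        = (\<Sum>k\<in>I - {m}. - (q ^ m) * D * (a k / c k))"
    proof (intro sum.cong refl)
      fix k assume kk: "k \<in> I - {m}"
      show "a k * (\<Sum>i\<in>I - {k}. (\<Prod>j\<in>I - {k} - {i}. c j) * (- (q ^ i))) = - (q ^ m) * D * (a k / c k)"
        unfolding inner_ne[OF kk] by simp
    qed
    also have "\<dots> = - (q ^ m) * D * S1" unfolding S1_def by (simp add: sum_distrib_left)
    also have "(\<Sum>i\<in>I - {m}. (\<Prod>j\<in>I - {m} - {i}. c j) * (- (q ^ i))) = - (q ^ m) * D * S3"
      unfolding inner_m S3_def sum_distrib_left
    proof (intro sum.cong refl)
      fix i assume "i \<in> I - {m}"
      show "D / c i * - (q ^ i) = - (q ^ m) * D * (q powi (int i - int m) / c i)"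
        by (subst qpm[of i]) (simp add: mult_ac)
    qed
    finally show ?thesis by (simp add: algebra_simps)
  qed
  have dB: "poly (pderiv PB) (t m) = - (q ^ m) * K * E * S2"
  proof -
    have "poly (pderiv PB) (t m) = K * (\<Sum>i<n - l. (\<Prod>j\<in>{..<n - l} - {i}. e j) * (- (z * q ^ i)))"
      unfolding PB_def pderiv_smult pderiv_prod
      by (simp add: poly_sum poly_prod pe dlin mult.commute)
    also have "\<dots> = K * (\<Sum>i<n - l. - (q ^ m) * E * (z * q powi (int i - int m) / e i))"
    proof (intro arg_cong[where f = "\<lambda>x. K * x"] sum.cong refl)
      fix i assume "i \<in> {..<n - l}"
      thus "(\<Prod>j\<in>{..<n - l} - {i}. e j) * - (z * q ^ i) = - (q ^ m) * E * (z * q powi (int i - int m) / e i)"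
        by (subst qpm[of i]) (simp add: Ediv mult_ac)
    qed
    also have "\<dots> = - (q ^ m) * K * E * S2" unfolding S2_def
      by (simp add: sum_distrib_left mult_ac)
    finally show ?thesis .
  qed
  have amD: "a m * D = K * E"
  proof -
    have "poly PA (t m) = a m * D" unfolding evalA[OF mI] D_def c_def ..
    moreover have "poly PB (t m) = K * E" unfolding PB_def E_def by (simp add: poly_prod pe)
    ultimately show ?thesis using evalAB[OF mI] by simp
  qed
  have key: "S1 = a m * (S2 - S3)"
  proof -
    have "- (q ^ m) * D * (S1 + a m * S3) = - (q ^ m) * K * E * S2" using dA dB PAB by metis
    hence "- (q ^ m) * (D * (S1 + a m * S3)) = - (q ^ m) * (K * E * S2)" by (simp only: mult.assoc)
    hence "D * (S1 + a m * S3) = K * E * S2" using q0 by (subst (asm) mult_left_cancel) simp_all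
    hence "D * (S1 + a m * S3) = D * (a m * S2)" using amD by (simp add: mult_ac)
    hence "S1 + a m * S3 = a m * S2" using Dnz by simp
    thus ?thesis by (simp add: algebra_simps)
  qed
  have am: "a m = (-1) ^ m * q ^ ((m + 1) choose 2) * qbinom q n m * qpoch w q l
           * qpoch (z * q powi (- int m)) q (n - l)"
  proof -
    have "a m = qbinom q n m * (qpoch (q / z) q m * z ^ m) * qpoch w q (n - m)"
      unfolding a_def by (simp add: mult_ac)
    also have "\<dots> = (-1) ^ m * q ^ ((m + 1) choose 2) * qbinom q n m *
        (qpoch (z * q powi (- int m)) q m * qpoch w q (n - m))"
      unfolding qpoch_sign[OF q0 z0] by (simp add: mult_ac)
    also have "\<dots> = (-1) ^ m * q ^ ((m + 1) choose 2) * qbinom q n m *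
        (qpoch (z * q powi (- int m)) q (n - l) * qpoch w q l)"
      unfolding w_def qpoch_comb[OF q0 mn ln] ..
    finally show ?thesis by (simp add: mult_ac)
  qed
  have lhs: "(\<Sum>k\<in>{0..n} - {m}. qbinom q n k * qpoch (q / z) q k * qpoch (z * q powi (- int l)) q (n - k)
             / (1 - q powi (int k - int m)) * z ^ k) = S1"
    unfolding S1_def I_def a_def c_def w_def by (intro sum.cong refl) simp
  show ?thesis unfolding lhs key am
    unfolding S2_def S3_def e_def c_def I_def w_def by (simp add: mult_ac)
qed

end
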